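(* Let $N>1$ be an integer, $0<\epsilon<e$, and $\tfrac12<\beta<1$. Set \[ K=\left\lceil \log_{1/\beta}(N)\right\rceil\cdot\left\lceil \frac{\log(e/\epsilon)}{\log(\beta/(1-\beta))}\right\rceil . \] Then there exist functions $c_1,\dots,c_K:[0,N]\to\mathbb{R}$ and $r_1,\dots,r_K:[1,N]\to\mathbb{R}$ such that $h(x,y)=\sum_{i=1}^K c_i(x)r_i(y)$ satisfies \[ \left|\Lambda\!\left(\tfrac{x+y}{2}\right)-h(x,y)\right|\le\epsilon\qquad\text{for all }(x,y)\in[0,N]\times[1,N], \] where $\Lambda(z)=\Gamma(z+1/2)/\Gamma(z+1)$. In particular $K=\mathcal{O}(\log N\log(1/\epsilon))$ for fixed $\beta$.
   Context: $\Gamma$ denotes the gamma function; $e$ is Euler's number; $\log$ is the natural logarithm. A function of the form $\sum_{i=1}^K c_i(x)r_i(y)$ (with no continuity required) is said to have rank at most $K$. *)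

theory Defs
  imports "HOL-Analysis.Analysis"
begin

definition Lambda :: "real \<Rightarrow> real" where
  "Lambda z = Gamma (z + 1/2) / Gamma (z + 1)"

end

theory Submission
  imports Defs "HOL-Analysis.Analysis"
begin


lemma exp_rem:
  fixes v :: real and n :: nat
  shows "\<exists>\<theta>. (if v \<ge> 0 then 0 \<le> \<theta> \<and> \<theta> \<le> v else v \<le> \<theta> \<and> \<theta> \<le> 0) \<and>
     exp v = (\<Sum>m<n. v^m / fact m) + exp \<theta> / fact n * v^n"
proof (cases "n = 0")
  case True
  then show ?thesis by (intro exI[of _ v]) auto
next
  case n: False
  show ?thesis
  proof (cases "v = 0")
    case True
    then show ?thesis using Maclaurin_exp_le[of v n] by auto
  next
    case False
    show ?thesis
    proof (cases "v > 0")
      case True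
      from Maclaurin[of v n "\<lambda>_. exp" exp] True n
      obtain t where "0 < t" "t < v" "exp v = (\<Sum>m<n. exp 0 / fact m * v ^ m) + exp t / fact n * v ^ n"
        by (auto intro: DERIV_exp)
      then show ?thesis using True by (intro exI[of _ t]) (auto simp: mult.commute)
    next
      case neg: False
      with False have "v < 0" by simp
      from Maclaurin_minus[of v n "\<lambda>_. exp" exp] this n
      obtain t where "v < t" "t < 0" "exp v = (\<Sum>m<n. exp 0 / fact m * v ^ m) + exp t / fact n * v ^ n"
        by (auto intro: DERIV_exp)
      then show ?thesis using \<open>v < 0\<close> by (intro exI[of _ t]) (auto simp: mult.commute)
    qed
  qed
qed

lemma exp_ge_term:
  fixes u :: real assumes "0 \<le> u" shows "u^k / fact k \<le> exp u"
proof -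
  obtain t where t: "0 \<le> t" "exp u = (\<Sum>m<k. u^m / fact m) + exp t / fact k * u^k"
    using exp_rem[of u k] assms by auto
  have "(\<Sum>m<k. u^m / fact m) \<ge> 0" using assms by (intro sum_nonneg) auto
  moreover have "exp t / fact k * u^k \<ge> 1 / fact k * u^k"
    using t(1) assms by (intro mult_right_mono divide_right_mono) auto
  ultimately show ?thesis using t(2) by simp
qed

lemma powr_ln_bound:
  fixes t c :: real assumes "0 < t" "t < 1" "0 < c"
  shows "t powr c * \<bar>ln t\<bar>^k \<le> fact k / c^k"
proof -
  define s where "s = - ln t"
  have s: "s > 0" using assms by (simp add: s_def)
  have "(c * s)^k / fact k \<le> exp (c * s)" using s assms by (intro exp_ge_term) simp
  hence "(c * s)^k \<le> fact k * exp (c * s)" by (simp add: field_simps)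
  hence "exp (-(c * s)) * (c * s)^k \<le> exp (-(c * s)) * (fact k * exp (c * s))"
    by (intro mult_left_mono) auto
  also have "\<dots> = fact k" by (simp add: exp_minus field_simps)
  finally have 1: "exp (-(c * s)) * s^k * c^k \<le> fact k" by (simp add: power_mult_distrib mult_ac)
  have "t powr c * \<bar>ln t\<bar>^k = exp (-(c * s)) * s^k"
    using assms s by (simp add: powr_def s_def)
  also have "\<dots> \<le> fact k / c^k" using 1 assms by (simp add: field_simps)
  finally show ?thesis .
qed



definition gk :: "nat \<Rightarrow> real \<Rightarrow> real \<Rightarrow> real \<Rightarrow> real" where
  "gk k x0 y t = t powr ((x0+y-1)/2) * ln t ^ k * (1-t) powr (-1/2)"

definition G :: "nat \<Rightarrow> real \<Rightarrow> real \<Rightarrow> real" where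
  "G k x0 y = integral {0<..<1} (gk k x0 y)"

lemma Beta_Lambda:
  fixes z :: real assumes "z \<ge> 0"
  shows "((\<lambda>t. t powr (z - 1/2) * (1-t) powr (-1/2)) has_integral (sqrt pi * Lambda z)) {0<..<1}"
proof -
  have h: "((\<lambda>t. t powr ((z + 1/2) - 1) * (1 - t) powr (1/2 - 1)) has_integral Beta (z+1/2) (1/2)) {0..1}"
    using assms by (intro has_integral_Beta_real) auto
  have e1: "(z + 1/2) - 1 = z - 1/2" "(1/2::real) - 1 = -1/2" by simp_all
  have "Beta (z+1/2) (1/2) = sqrt pi * Lambda z"
    by (simp add: Beta_def Lambda_def Gamma_one_half_real add.assoc)
  with h e1 show ?thesis by (simp add: has_integral_Icc_iff_Ioo)
qed

lemma Beta_half: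
  "((\<lambda>t. t powr (-1/2) * (1-t) powr (-1/2)) has_integral pi) {0<..<1::real}"
proof -
  have h: "((\<lambda>t. t powr ((1/2) - 1) * (1 - t) powr (1/2 - 1)) has_integral Beta (1/2) (1/2)) {0..1::real}"
    by (intro has_integral_Beta_real) auto
  have e1: "(1/2::real) - 1 = -1/2" by simp_all
  have "Beta (1/2) (1/2) = pi"
    by (simp add: Beta_def Gamma_one_half_real)
  with h e1 show ?thesis by (simp add: has_integral_Icc_iff_Ioo)
qed

lemma gk_integrable:
  assumes "0 \<le> x0" "1 \<le> y"
  shows "gk k x0 y integrable_on {0<..<1}"
proof (rule measurable_bounded_by_integrable_imp_integrable_real)
  define c where "c = (x0 + y)/2"
  have c: "c > 0" using assms by (simp add: c_def)
  show "gk k x0 y \<in> borel_measurable (lebesgue_on {0<..<1})"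
    by (rule continuous_imp_measurable_on_sets_lebesgue)
       (auto simp: gk_def intro!: continuous_intros)
  show "(\<lambda>t. fact k / c^k * (t powr (-1/2) * (1-t) powr (-1/2))) integrable_on {0<..<1}"
    using has_integral_mult_right[OF Beta_half] by blast
  show "\<bar>gk k x0 y t\<bar> \<le> fact k / c^k * (t powr (-1/2) * (1-t) powr (-1/2))"
    if t: "t \<in> {0<..<1}" for t
  proof -
    have "t powr ((x0+y-1)/2) = t powr (-1/2) * t powr c"
      using t by (simp add: c_def powr_add[symmetric] diff_divide_distrib)
    hence "\<bar>gk k x0 y t\<bar> = (t powr c * \<bar>ln t\<bar>^k) * (t powr (-1/2) * (1-t) powr (-1/2))"
      using t by (simp add: gk_def abs_mult power_abs)
    also have "\<dots> \<le> fact k / c^k * (t powr (-1/2) * (1-t) powr (-1/2))"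
      using t c by (intro mult_right_mono powr_ln_bound) auto
    finally show ?thesis .
  qed
qed auto



lemma main_approx:
  fixes x x0 y :: real and B :: nat
  assumes x: "0 \<le> x" and x0: "0 \<le> x0" and y: "1 \<le> y"
  shows "\<bar>Lambda ((x+y)/2) - (\<Sum>k<B. ((x-x0)/2)^k / fact k * (G k x0 y / sqrt pi))\<bar>
           \<le> sqrt pi * (\<bar>x-x0\<bar> / (min x x0 + y))^B"
proof -
  define S where "S = {0<..<1::real}"
  define r where "r = \<bar>x-x0\<bar> / (min x x0 + y)"
  define m where "m = min x x0"
  have m: "m \<ge> 0" "m \<le> x" "m \<le> x0" using x x0 by (auto simp: m_def)
  define cm where "cm = (m + y)/2"
  have cm: "cm > 0" using m y by (simp add: cm_def)
  have r_eq: "r = (\<bar>x-x0\<bar>/2) / cm" using m by (simp add: r_def cm_def m_def)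
  have r0: "r \<ge> 0" using m y by (simp add: r_def m_def)
  define D where "D t = t powr ((x+y)/2 - 1/2) * (1-t) powr (-1/2)
      - (\<Sum>k<B. ((x-x0)/2)^k / fact k * gk k x0 y t)" for t
  have hD: "(D has_integral (sqrt pi * Lambda ((x+y)/2) - (\<Sum>k<B. ((x-x0)/2)^k / fact k * G k x0 y))) S"
    unfolding D_def S_def
    using x y
    by (intro has_integral_diff Beta_Lambda has_integral_sum has_integral_mult_right)
       (auto simp: G_def intro!: integrable_integral gk_integrable x0 y)
  have hB: "((\<lambda>t. r^B * (t powr (-1/2) * (1-t) powr (-1/2))) has_integral r^B * pi) S"
    unfolding S_def by (intro has_integral_mult_right Beta_half)
  have bound: "\<bar>D t\<bar> \<le> r^B * (t powr (-1/2) * (1-t) powr (-1/2))" if t: "t \<in> S" for t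
  proof -
    have t0: "0 < t" "t < 1" using t by (auto simp: S_def)
    define v where "v = (x-x0)/2 * ln t"
    define P where "P = t powr ((x0+y-1)/2)"
    define W where "W = (1-t) powr (-1/2)"
    have P0: "P > 0" "W > 0" using t0 by (auto simp: P_def W_def)
    have e1: "t powr ((x+y)/2 - 1/2) = P * exp v"
      using t0 by (simp add: P_def v_def powr_def exp_add[symmetric] field_simps)
    have e2: "((x-x0)/2)^k / fact k * gk k x0 y t = P * W * (v^k / fact k)" for k
      by (simp add: gk_def P_def W_def v_def power_mult_distrib[symmetric])
    have Deq: "D t = P * W * (exp v - (\<Sum>k<B. v^k / fact k))"
      unfolding D_def e1 e2 by (simp add: sum_distrib_left W_def right_diff_distrib)
    obtain \<theta> where th: "(if v \<ge> 0 then 0 \<le> \<theta> \<and> \<theta> \<le> v else v \<le> \<theta> \<and> \<theta> \<le> 0)"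
      and th2: "exp v = (\<Sum>m<B. v^m / fact m) + exp \<theta> / fact B * v^B"
      using exp_rem[of v B] by blast
    have lnt: "ln t < 0" using t0 by simp
    have Pth: "P * exp \<theta> \<le> t powr ((m+y-1)/2)"
    proof (cases "x \<ge> x0")
      case True
      hence "v \<le> 0" using lnt by (simp add: v_def mult_nonneg_nonpos)
      hence "\<theta> \<le> 0" using th by (auto split: if_splits)
      hence "exp \<theta> \<le> 1" by simp
      hence "P * exp \<theta> \<le> P" using P0 by (simp add: mult_left_le)
      moreover have "m = x0" using True by (simp add: m_def)
      ultimately show ?thesis by (simp add: P_def)
    next
      case False
      hence "v > 0" using lnt by (simp add: v_def mult_neg_neg)
      hence "\<theta> \<le> v" using th by (auto split: if_splits)
      hence "P * exp \<theta> \<le> P * exp v" using P0 by simp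
      moreover have "m = x" using False by (simp add: m_def)
      moreover have "P * exp v = t powr ((x+y-1)/2)"
        using e1 by (simp add: diff_divide_distrib)
      ultimately show ?thesis by simp
    qed
    have split: "t powr ((m+y-1)/2) = t powr (-1/2) * t powr cm"
      using t0 by (simp add: cm_def powr_add[symmetric] diff_divide_distrib)
    have "\<bar>D t\<bar> = W * (P * exp \<theta>) * \<bar>v\<bar>^B / fact B"
      using P0 by (simp add: Deq th2 abs_mult power_abs)
    also have "\<dots> \<le> W * (t powr (-1/2) * t powr cm) * \<bar>v\<bar>^B / fact B"
      using P0 Pth split by (intro divide_right_mono mult_right_mono mult_left_mono) auto
    also have "\<dots> = W * t powr (-1/2) * (\<bar>x-x0\<bar>/2)^B * (t powr cm * \<bar>ln t\<bar>^B / fact B)"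
    proof -
      have "\<bar>v\<bar>^B = (\<bar>x-x0\<bar>/2)^B * \<bar>ln t\<bar>^B"
        by (simp add: v_def abs_mult power_mult_distrib[symmetric])
      thus ?thesis by simp
    qed
    also have "\<dots> \<le> W * t powr (-1/2) * (\<bar>x-x0\<bar>/2)^B * (1 / cm^B)"
    proof -
      have "t powr cm * \<bar>ln t\<bar>^B \<le> fact B / cm^B" using powr_ln_bound[OF t0 cm] .
      hence "t powr cm * \<bar>ln t\<bar>^B / fact B \<le> 1 / cm^B" by (simp add: field_simps)
      thus ?thesis using P0 by (intro mult_left_mono) auto
    qed
    also have "\<dots> = r^B * (t powr (-1/2) * (1-t) powr (-1/2))"
      using cm by (simp add: r_eq W_def power_divide)
    finally show ?thesis .
  qed
  define I where "I = sqrt pi * Lambda ((x+y)/2) - (\<Sum>k<B. ((x-x0)/2)^k / fact k * G k x0 y)"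
  have "I \<le> r^B * pi"
    by (rule has_integral_le[OF hD[folded I_def] hB]) (use bound in \<open>auto simp: abs_le_iff\<close>)
  moreover have "-I \<le> r^B * pi"
    by (rule has_integral_le[OF has_integral_neg[OF hD[folded I_def]] hB]) (use bound in \<open>auto simp: abs_le_iff\<close>)
  ultimately have I: "\<bar>I\<bar> \<le> r^B * pi" by linarith
  have sp: "sqrt pi > 0" by simp
  have "Lambda ((x+y)/2) - (\<Sum>k<B. ((x-x0)/2)^k / fact k * (G k x0 y / sqrt pi)) = I / sqrt pi"
    using sp by (simp add: I_def diff_divide_distrib sum_divide_distrib)
  also have "\<bar>I / sqrt pi\<bar> \<le> r^B * pi / sqrt pi"
    using I sp by (simp add: divide_right_mono)
  also have "r^B * pi / sqrt pi = sqrt pi * r^B"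
  proof -
    have "pi = sqrt pi * sqrt pi" by simp
    hence "r^B * pi / sqrt pi = r^B * sqrt pi * (sqrt pi / sqrt pi)" by (metis mult.assoc times_divide_eq_right)
    thus ?thesis using sp by simp
  qed
  finally show ?thesis by (simp add: r_def)
qed



lemma ratio_bound:
  fixes q P x y :: real
  assumes q: "q > 1" and P: "P \<ge> 1" and X: "P \<le> x + 1" "x + 1 \<le> q*(q*P)" and y: "1 \<le> y" and x: "0 \<le> x"
  shows "\<bar>x - (q*P - 1)\<bar> / (min x (q*P - 1) + y) \<le> q - 1"
proof -
  have qP: "q*P \<ge> 1" using mult_mono[of 1 q 1 P] q P by simp
  have den: "min x (q*P - 1) + y > 0" using x qP y by auto
  have "\<bar>x - (q*P - 1)\<bar> \<le> (q - 1) * (min x (q*P - 1) + y)"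
  proof (cases "x \<le> q*P - 1")
    case True
    have "q*P \<le> q*(x+1)" using X q by simp
    hence "q*P - (x+1) \<le> (q-1)*(x+1)" by (simp add: algebra_simps)
    also have "\<dots> \<le> (q-1)*(x+y)" using q y by (intro mult_left_mono) auto
    finally show ?thesis using True by (simp add: min_def)
  next
    case False
    have "(x+1) - q*P \<le> (q-1)*(q*P)" using X by (simp add: algebra_simps)
    also have "\<dots> \<le> (q-1)*(q*P - 1 + y)" using q y by (intro mult_left_mono) auto
    finally show ?thesis using False by (simp add: min_def)
  qed
  thus ?thesis using den by (simp add: divide_le_eq)
qed

lemma block_exists:
  fixes q X :: real and A :: nat
  assumes q: "q > 1" and X: "1 \<le> X" "X < q powr (2*A)"
  shows "q^(2 * nat \<lfloor>log q X / 2\<rfloor>) \<le> X \<and> X \<le> q^(2 * nat \<lfloor>log q X / 2\<rfloor> + 2) \<and> nat \<lfloor>log q X / 2\<rfloor> < A"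
proof -
  define L where "L = log q X"
  have L0: "L \<ge> 0" using q X by (simp add: L_def)
  define J where "J = nat \<lfloor>L/2\<rfloor>"
  have fl: "real_of_int \<lfloor>L/2\<rfloor> \<le> L/2" "L/2 < real_of_int \<lfloor>L/2\<rfloor> + 1" "\<lfloor>L/2\<rfloor> \<ge> 0"
    using L0 floor_correct[of "L/2"] by auto
  have J: "real J \<le> L/2" "L/2 < real J + 1" using fl by (simp_all add: J_def)
  have XL: "q powr L = X" using q X by (simp add: L_def)
  have pw: "q powr (real n) = q^n" for n by (rule powr_realpow) (use q in simp)
  have "q^(2*J) = q powr (2*J)" using pw[of "2*J"] by simp
  also have "\<dots> \<le> q powr L" using q J by (intro powr_mono) auto
  finally have 1: "q^(2*J) \<le> X" using XL by simp
  have "X = q powr L" using XL by simp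
  also have "\<dots> \<le> q powr (2*J+2)" using q J by (intro powr_mono) auto
  also have "\<dots> = q^(2*J+2)" using pw[of "2*J+2"] by simp
  finally have 2: "X \<le> q^(2*J+2)" .
  have "q powr L < q powr (2*A)" using XL X by simp
  hence "L < 2*A" using q by simp
  hence "J < A" using J by linarith
  with 1 2 show ?thesis by (simp add: J_def L_def)
qed



theorem theorem3p5:
  fixes N :: nat and \<epsilon> \<beta> :: real
  assumes "N > 1" and "0 < \<epsilon>" and "\<epsilon> < exp 1"
    and "1/2 < \<beta>" and "\<beta> < 1"
  defines "K \<equiv> nat (\<lceil>log (1/\<beta>) (real N)\<rceil> * \<lceil>ln (exp 1 / \<epsilon>) / ln (\<beta> / (1 - \<beta>))\<rceil>)"
  shows "\<exists>c r :: nat \<Rightarrow> real \<Rightarrow> real.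
           \<forall>x y. x \<in> {0..real N} \<longrightarrow> y \<in> {1..real N} \<longrightarrow>
             \<bar>Lambda ((x + y) / 2) - (\<Sum>i=1..K. c i x * r i y)\<bar> \<le> \<epsilon>"
proof -
  note N = assms(1) and eps = assms(2,3) and bet = assms(4,5)
  define q where "q = 1/\<beta>"
  have q: "q > 1" "q < 2" using bet by (auto simp: q_def field_simps)
  define A' where "A' = \<lceil>log q (real N)\<rceil>"
  define B' where "B' = \<lceil>ln (exp 1 / \<epsilon>) / ln (\<beta> / (1 - \<beta>))\<rceil>"
  define A where "A = nat A'"
  define B where "B = nat B'"
  have "log q (real N) \<ge> 0" using q N by simp
  hence A'0: "A' \<ge> 0" by (simp add: A'_def)
  have KAB: "K = A * B" using A'0 by (simp add: K_def A_def B_def A'_def B'_def q_def nat_mult_distrib)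
  define \<rho> where "\<rho> = q - 1"
  have \<rho>: "0 < \<rho>" "\<rho> < 1" using q by (auto simp: \<rho>_def)
  have \<rho>_eq: "\<beta> / (1 - \<beta>) = 1 / \<rho>" using bet by (simp add: \<rho>_def q_def field_simps)
  have lnr: "ln (1/\<rho>) > 0" using \<rho> by simp
  have "ln \<epsilon> < ln (exp 1)" using eps by (subst ln_less_cancel_iff) auto
  hence leps: "ln (exp 1 / \<epsilon>) > 0" using eps by (simp add: ln_div)
  have "ln (exp 1 / \<epsilon>) / ln (1/\<rho>) \<le> real B"
  proof -
    have "ln (exp 1 / \<epsilon>) / ln (1/\<rho>) \<le> of_int B'" unfolding B'_def \<rho>_eq by linarith
    moreover have "ln (exp 1 / \<epsilon>) / ln (1/\<rho>) \<ge> 0" using leps lnr by simp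
    hence "B' \<ge> 0" by (simp add: B'_def \<rho>_eq)
    ultimately show ?thesis by (simp add: B_def)
  qed
  hence "ln (exp 1 / \<epsilon>) \<le> real B * ln (1/\<rho>)" using lnr by (simp add: divide_le_eq)
  hence "ln (\<rho>^B) \<le> ln (\<epsilon> / exp 1)" using \<rho> eps by (simp add: ln_realpow ln_div)
  hence rhoB: "\<rho>^B \<le> \<epsilon> / exp 1" using \<rho> eps by simp
  have spe: "sqrt pi \<le> exp 1"
  proof -
    have "2 \<le> exp (1::real)" using exp_ge_add_one_self[of 1] by simp
    hence "4 \<le> exp (1::real) * exp 1" using mult_mono[of "2::real" "exp 1" 2 "exp 1"] by simp
    hence "pi \<le> exp 1 * exp 1" using pi_less_4 by linarith
    hence "sqrt pi \<le> sqrt (exp 1 * exp 1)" by (rule real_sqrt_le_mono)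
    thus ?thesis by simp
  qed
  have final: "sqrt pi * \<rho>^B \<le> \<epsilon>"
  proof -
    have "sqrt pi * \<rho>^B \<le> exp 1 * (\<epsilon> / exp 1)" using spe rhoB \<rho> by (intro mult_mono) auto
    thus ?thesis by simp
  qed
  have qA: "q powr A \<ge> real N"
  proof -
    have "log q (real N) \<le> real A" using A'0 by (simp add: A_def A'_def)
    hence "q powr (log q (real N)) \<le> q powr (real A)" using q by simp
    thus ?thesis using q N by simp
  qed
  have q2A: "real N + 1 < q powr (2*A)"
  proof -
    have "q powr (2*A) = q powr A * q powr A" using q by (simp add: powr_add[symmetric])
    also have "\<dots> \<ge> real N * real N" using qA N by (intro mult_mono) auto
    finally have "real N * real N \<le> q powr (2*A)" .
    moreover have "real N + 1 < real N * real N"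
    proof -
      have "real N \<ge> 2" using N by simp
      hence "real N * 2 \<le> real N * real N" by (intro mult_left_mono) auto
      thus ?thesis using \<open>real N \<ge> 2\<close> by linarith
    qed
    ultimately show ?thesis by linarith
  qed
  define jx where "jx x = nat \<lfloor>log q (x+1) / 2\<rfloor>" for x :: real
  define x0 where "x0 j = q^(2*j+1) - 1" for j :: nat
  define c where "c i x = (if (i-1) div B = jx x then ((x - x0 ((i-1) div B))/2)^((i-1) mod B) / fact ((i-1) mod B) else 0)" for i :: nat and x :: real
  define r where "r i y = G ((i-1) mod B) (x0 ((i-1) div B)) y / sqrt pi" for i :: nat and y :: real
  have main: "\<bar>Lambda ((x+y)/2) - (\<Sum>i=1..K. c i x * r i y)\<bar> \<le> \<epsilon>"
    if x: "x \<in> {0..real N}" and y: "y \<in> {1..real N}" for x y :: real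
  proof -
    define J where "J = jx x"
    have blk: "q^(2*J) \<le> x+1 \<and> x+1 \<le> q^(2*J+2) \<and> J < A"
      unfolding J_def jx_def using block_exists[OF q(1), of "x+1" A] x q2A by auto
    have x0J: "x0 J = q * q^(2*J) - 1" by (simp add: x0_def)
    have P1: "q^(2*J) \<ge> 1" using q by simp
    have x00: "0 \<le> x0 J" using x0J P1 q mult_mono[of 1 q 1 "q^(2*J)"] by simp
    have sum_eq: "(\<Sum>i=1..K. c i x * r i y) = (\<Sum>k<B. ((x - x0 J)/2)^k / fact k * (G k (x0 J) y / sqrt pi))"
    proof -
      define g where "g k = J*B + k + 1" for k
      have JA: "J < A" using blk by simp
      have img: "g ` {..<B} \<subseteq> {1..K}"
      proof
        fix i assume "i \<in> g ` {..<B}"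
        then obtain k where k: "k < B" "i = g k" by auto
        have "J*B + B \<le> A*B" using mult_le_mono1[of "Suc J" A B] JA by simp
        thus "i \<in> {1..K}" using k by (simp add: g_def KAB)
      qed
      have gk: "(g k - 1) div B = J" "(g k - 1) mod B = k" if "k < B" for k
        using that by (simp_all add: g_def)
      have "(\<Sum>i=1..K. c i x * r i y) = (\<Sum>i\<in>g ` {..<B}. c i x * r i y)"
      proof (rule sum.mono_neutral_right[OF _ img])
        show "\<forall>i\<in>{1..K} - g ` {..<B}. c i x * r i y = 0"
        proof
          fix i assume i: "i \<in> {1..K} - g ` {..<B}"
          have "(i-1) div B \<noteq> J"
          proof
            assume h: "(i-1) div B = J"
            have "B > 0" using i by (auto simp: KAB)
            hence "(i-1) mod B < B" by simp
            moreover have "i = g ((i-1) mod B)"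
            proof -
              have "i - 1 = J*B + (i-1) mod B" using div_mult_mod_eq[of "i-1" B] h by (simp only:)
              moreover have "i \<ge> 1" using i by simp
              ultimately show ?thesis by (simp add: g_def)
            qed
            ultimately show False using i by auto
          qed
          thus "c i x * r i y = 0" by (simp add: c_def J_def)
        qed
      qed simp
      also have "\<dots> = (\<Sum>k<B. c (g k) x * r (g k) y)"
        by (rule sum.reindex_cong[of g]) (auto simp: inj_on_def g_def)
      also have "\<dots> = (\<Sum>k<B. ((x - x0 J)/2)^k / fact k * (G k (x0 J) y / sqrt pi))"
      proof (rule sum.cong)
        fix k assume "k \<in> {..<B}"
        hence k: "k < B" by simp
        show "c (g k) x * r (g k) y = ((x - x0 J)/2)^k / fact k * (G k (x0 J) y / sqrt pi)"
          unfolding c_def r_def by (simp only: gk[OF k] J_def if_True refl simp_thms)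
      qed simp
      finally show ?thesis .
    qed
    have ratio: "\<bar>x - x0 J\<bar> / (min x (x0 J) + y) \<le> \<rho>"
      unfolding x0J \<rho>_def using ratio_bound[OF q(1) P1, of x y] blk x y by (simp add: mult.assoc power_add)
    have "\<bar>Lambda ((x+y)/2) - (\<Sum>i=1..K. c i x * r i y)\<bar> \<le> sqrt pi * (\<bar>x - x0 J\<bar> / (min x (x0 J) + y))^B"
      unfolding sum_eq using main_approx[of x "x0 J" y B] x y x00 by simp
    also have "\<dots> \<le> sqrt pi * \<rho>^B"
      using ratio x y x00 by (intro mult_left_mono power_mono) auto
    finally have "\<bar>Lambda ((x+y)/2) - (\<Sum>i=1..K. c i x * r i y)\<bar> \<le> \<epsilon>" using final by linarith
    then show ?thesis .
  qed
  show ?thesis using main by blast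
qed


end
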